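(* Any categorial sequential allocation mechanism with all agents optimistic has worst-case egalitarian rank equal to $n^p$ (the largest possible).
   Context: Basic categorized domain: $n$ agents, $p$ categories $D_i=\{1,\ldots,n\}$ of indivisible items, bundles $\mathfrak D=D_1\times\cdots\times D_p$; each agent $j$ has a linear order $R_j$ over $\mathfrak D$; a profile is $P_n=(R_1,\ldots,R_n)$. $\mathrm{Rank}(R,\vec d)$ is the position of $\vec d$ in $R$ (top $=1$, bottom $=n^p$). CSAM $f_\mathcal O$: given a linear order $\mathcal O$ over $\{1,\ldots,n\}\times\{1,\ldots,p\}$, in rounds $t=1,\ldots,np$, if the $t$-th element of $\mathcal O$ is $(j,i)$ then agent $j$ chooses an item $d_{j,i}$ from $D_{i,t}$, the items of $D_i$ not yet chosen at the start of round $t$. Agent $j$ receives $f^j_\mathcal O(P_n)=(d_{j,1},\ldots,d_{j,p})$. An optimistic agent $j$ choosing from $D_i$ in round $t$ picks the $i$-th component of her top-ranked bundle among available bundles, where a bundle is available to her if for each category $l$ from which she has already chosen its $l$-th component equals $d_{j,l}$, and for each other category $l$ its $l$-th component lies in $D_{l,t}$. Worst-case egalitarian rank: $\max_{P_n}\max_{j}\mathrm{Rank}(R_j,f^j_\mathcal O(P_n))$ over all profiles of $n$ agents. *)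

theory Defs
  imports Main "HOL-Library.FuncSet"
begin

text \<open>Agents are 1..n, categories are 1..p, the items of each category D_i are 1..n.
  A bundle is an (extensional) function on the categories 1..p with values in 1..n.\<close>

definition bundles :: "nat \<Rightarrow> nat \<Rightarrow> (nat \<Rightarrow> nat) set" where
  "bundles n p = PiE {1..p} (\<lambda>_. {1..n})"

text \<open>A linear order over the bundles is represented by the list of all bundles,
  from the top-ranked one (first) to the bottom-ranked one (last).\<close>

definition is_linear_order :: "nat \<Rightarrow> nat \<Rightarrow> (nat \<Rightarrow> nat) list \<Rightarrow> bool" where
  "is_linear_order n p R \<longleftrightarrow> distinct R \<and> set R = bundles n p"

definition Rank :: "(nat \<Rightarrow> nat) list \<Rightarrow> (nat \<Rightarrow> nat) \<Rightarrow> nat" where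
  "Rank R d = length (takeWhile (\<lambda>x. x \<noteq> d) R) + 1"

definition is_profile :: "nat \<Rightarrow> nat \<Rightarrow> (nat \<Rightarrow> (nat \<Rightarrow> nat) list) \<Rightarrow> bool" where
  "is_profile n p P \<longleftrightarrow> (\<forall>j\<in>{1..n}. is_linear_order n p (P j))"

definition is_csam_order :: "nat \<Rightarrow> nat \<Rightarrow> (nat \<times> nat) list \<Rightarrow> bool" where
  "is_csam_order n p Ord \<longleftrightarrow> distinct Ord \<and> set Ord = {1..n} \<times> {1..p}"

text \<open>State of the mechanism: A j l = Some d iff agent j has already chosen item d
  from category l.\<close>

type_synonym alloc_state = "nat \<Rightarrow> nat \<Rightarrow> nat option"

definition remaining :: "nat \<Rightarrow> alloc_state \<Rightarrow> nat \<Rightarrow> nat set" where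
  "remaining n A l = {d \<in> {1..n}. \<not> (\<exists>j. A j l = Some d)}"

definition available_bundle :: "nat \<Rightarrow> nat \<Rightarrow> alloc_state \<Rightarrow> nat \<Rightarrow> (nat \<Rightarrow> nat) \<Rightarrow> bool" where
  "available_bundle n p A j b \<longleftrightarrow> b \<in> bundles n p \<and>
     (\<forall>l\<in>{1..p}. (case A j l of Some x \<Rightarrow> b l = x | None \<Rightarrow> b l \<in> remaining n A l))"

definition optimistic_choice ::
  "nat \<Rightarrow> nat \<Rightarrow> (nat \<Rightarrow> (nat \<Rightarrow> nat) list) \<Rightarrow> alloc_state \<Rightarrow> nat \<Rightarrow> nat \<Rightarrow> nat" where
  "optimistic_choice n p P A j i = hd (filter (available_bundle n p A j) (P j)) i"

definition csam_step ::
  "nat \<Rightarrow> nat \<Rightarrow> (nat \<Rightarrow> (nat \<Rightarrow> nat) list) \<Rightarrow> alloc_state \<Rightarrow> nat \<times> nat \<Rightarrow> alloc_state" where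
  "csam_step n p P A ji = (case ji of (j, i) \<Rightarrow>
      A(j := (A j)(i := Some (optimistic_choice n p P A j i))))"

definition csam_run ::
  "nat \<Rightarrow> nat \<Rightarrow> (nat \<times> nat) list \<Rightarrow> (nat \<Rightarrow> (nat \<Rightarrow> nat) list) \<Rightarrow> alloc_state" where
  "csam_run n p Ord P = foldl (csam_step n p P) (\<lambda>_ _. None) Ord"

definition csam_alloc ::
  "nat \<Rightarrow> nat \<Rightarrow> (nat \<times> nat) list \<Rightarrow> (nat \<Rightarrow> (nat \<Rightarrow> nat) list) \<Rightarrow> nat \<Rightarrow> (nat \<Rightarrow> nat)" where
  "csam_alloc n p Ord P j = (\<lambda>i. if i \<in> {1..p} then the (csam_run n p Ord P j i) else undefined)"

definition worst_case_egalitarian_rank :: "nat \<Rightarrow> nat \<Rightarrow> (nat \<times> nat) list \<Rightarrow> nat" where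
  "worst_case_egalitarian_rank n p Ord =
     Max {Rank (P j) (csam_alloc n p Ord P j) | P j. is_profile n p P \<and> j \<in> {1..n}}"

end

theory Submission
  imports Defs
begin


abbreviation st where
  "st n p P Ord t \<equiv> foldl (csam_step n p P) (\<lambda>_ _. None) (take t Ord)"

lemma st_Suc:
  assumes "t < length Ord"
  shows "st n p P Ord (Suc t) = csam_step n p P (st n p P Ord t) (Ord ! t)"
  using assms by (simp add: take_Suc_conv_app_nth)

definition Inv :: "nat \<Rightarrow> alloc_state \<Rightarrow> (nat \<times> nat) set \<Rightarrow> bool" where
  "Inv n A S \<longleftrightarrow> (\<forall>j l. A j l \<noteq> None \<longleftrightarrow> (j, l) \<in> S) \<and>
     (\<forall>j l d. A j l = Some d \<longrightarrow> d \<in> {1..n}) \<and>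
     (\<forall>j1 j2 l d. A j1 l = Some d \<longrightarrow> A j2 l = Some d \<longrightarrow> j1 = j2)"

lemma card_taken_le:
  assumes dom: "\<And>j. A j l \<noteq> None \<Longrightarrow> j \<in> X" and that: "finite X"
  shows "card {d \<in> {1..n}. \<exists>j. A j l = Some d} \<le> card X"
proof -
  have "{d \<in> {1..n}. \<exists>j. A j l = Some d} \<subseteq> (\<lambda>j. the (A j l)) ` X"
    using dom by force
  then show ?thesis using that by (meson card_image_le card_mono finite_imageI le_trans)
qed

lemma remaining_nonempty:
  assumes dom: "\<And>j'. A j' l \<noteq> None \<Longrightarrow> j' \<in> {1..n}"
    and j: "j \<in> {1..n}" and none: "A j l = None"
  shows "\<exists>d. d \<in> remaining n A l"
proof (rule ccontr)
  assume "\<not> ?thesis"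
  hence "{1..n} \<subseteq> {d \<in> {1..n}. \<exists>j. A j l = Some d}"
    unfolding remaining_def by auto
  hence "card {1..n::nat} \<le> card {d \<in> {1..n}. \<exists>j. A j l = Some d}"
    by (intro card_mono) auto
  also have "\<dots> \<le> card ({1..n} - {j})"
    by (rule card_taken_le) (use dom none in auto)
  finally show False using j by auto
qed

lemma remaining_two:
  assumes dom: "\<And>j'. A j' l \<noteq> None \<Longrightarrow> j' \<in> {1..n}"
    and x: "x \<in> {1..n}" and y: "y \<in> {1..n}" and xy: "x \<noteq> y"
    and nx: "A x l = None" and ny: "A y l = None"
  shows "\<exists>d. d \<in> remaining n A l \<and> d \<noteq> 1"
proof (rule ccontr)
  assume "\<not> ?thesis"
  hence "{1..n} \<subseteq> insert 1 {d \<in> {1..n}. \<exists>j. A j l = Some d}"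
    unfolding remaining_def by auto
  hence "card {1..n::nat} \<le> card (insert 1 {d \<in> {1..n}. \<exists>j. A j l = Some d})"
    by (intro card_mono) auto
  also have "\<dots> \<le> Suc (card {d \<in> {1..n}. \<exists>j. A j l = Some d})"
    by (simp add: card_insert_le_m1)
  also have "card {d \<in> {1..n}. \<exists>j. A j l = Some d} \<le> card ({1..n} - {x, y})"
    by (rule card_taken_le) (use dom nx ny in auto)
  finally show False using x y xy by (auto simp: card_Diff_subset)
qed

lemma inv_dom:
  assumes "Inv n A S" "S \<subseteq> {1..n} \<times> {1..p}" "A j l \<noteq> None"
  shows "j \<in> {1..n}"
  using assms unfolding Inv_def by blast

lemma avail_exists:
  assumes inv: "Inv n A S" and S: "S \<subseteq> {1..n} \<times> {1..p}" and j: "j \<in> {1..n}"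
  shows "\<exists>b. available_bundle n p A j b"
proof -
  define b where "b = (\<lambda>l. if l \<in> {1..p} then (case A j l of Some x \<Rightarrow> x
      | None \<Rightarrow> (SOME d. d \<in> remaining n A l)) else undefined)"
  have rem: "(SOME d. d \<in> remaining n A l) \<in> remaining n A l" if "A j l = None" for l
  proof -
    have "\<exists>d. d \<in> remaining n A l"
      by (rule remaining_nonempty[of A l n j]) (use inv_dom[OF inv S] j that in auto)
    thus ?thesis by (rule someI_ex)
  qed
  have "available_bundle n p A j b"
    unfolding available_bundle_def bundles_def
  proof (intro conjI ballI)
    show "b \<in> {1..p} \<rightarrow>\<^sub>E {1..n}"
    proof
      fix l assume l: "l \<in> {1..p}"
      show "b l \<in> {1..n}"
      proof (cases "A j l")
        case None thus ?thesis using rem[of l] l by (auto simp: b_def remaining_def)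
      next
        case (Some x) thus ?thesis using inv l by (auto simp: b_def Inv_def)
      qed
    next
      fix l assume "l \<notin> {1..p}" thus "b l = undefined" unfolding b_def by presburger
    qed
  next
    fix l assume l: "l \<in> {1..p}"
    show "case A j l of None \<Rightarrow> b l \<in> remaining n A l | Some x \<Rightarrow> b l = x"
      using rem[of l] l by (cases "A j l") (auto simp: b_def)
  qed
  thus ?thesis by blast
qed

lemma profile_bundles: "is_profile n p P \<Longrightarrow> j \<in> {1..n} \<Longrightarrow> set (P j) = bundles n p"
  by (simp add: is_profile_def is_linear_order_def)

lemma top_avail:
  assumes inv: "Inv n A S" and S: "S \<subseteq> {1..n} \<times> {1..p}" and j: "j \<in> {1..n}"
    and P: "is_profile n p P"
  shows "filter (available_bundle n p A j) (P j) \<noteq> []"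
    and "available_bundle n p A j (hd (filter (available_bundle n p A j) (P j)))"
proof -
  obtain b where b: "available_bundle n p A j b" using avail_exists[OF inv S j] by blast
  hence "b \<in> set (P j)" using profile_bundles[OF P j] by (simp add: available_bundle_def)
  thus ne: "filter (available_bundle n p A j) (P j) \<noteq> []" using b
    by (metis (mono_tags) filter_empty_conv)
  show "available_bundle n p A j (hd (filter (available_bundle n p A j) (P j)))"
    using hd_in_set[OF ne] by simp
qed

lemma choice_remaining:
  assumes inv: "Inv n A S" and S: "S \<subseteq> {1..n} \<times> {1..p}" and j: "j \<in> {1..n}"
    and P: "is_profile n p P" and i: "i \<in> {1..p}" and none: "A j i = None"
  shows "optimistic_choice n p P A j i \<in> remaining n A i"
proof -
  let ?b = "hd (filter (available_bundle n p A j) (P j))"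
  have "available_bundle n p A j ?b" by (rule top_avail(2)[OF inv S j P])
  hence "case A j i of Some x \<Rightarrow> ?b i = x | None \<Rightarrow> ?b i \<in> remaining n A i"
    using i unfolding available_bundle_def by blast
  thus ?thesis using none by (simp add: optimistic_choice_def)
qed

lemma step_eq:
  "csam_step n p P A (j, i) j' l = (if j' = j \<and> l = i then Some (optimistic_choice n p P A j i) else A j' l)"
  by (simp add: csam_step_def)

lemma inv_step:
  assumes inv: "Inv n A S" and S: "S \<subseteq> {1..n} \<times> {1..p}" and j: "j \<in> {1..n}"
    and P: "is_profile n p P" and i: "i \<in> {1..p}" and notin: "(j, i) \<notin> S"
  shows "Inv n (csam_step n p P A (j, i)) (insert (j, i) S)"
proof -
  have none: "A j i = None" using inv notin unfolding Inv_def by blast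
  define d where "d = optimistic_choice n p P A j i"
  have c: "d \<in> remaining n A i" unfolding d_def
    by (rule choice_remaining[OF inv S j P i none])
  hence c1: "d \<in> {1..n}" and c2: "\<And>j'. A j' i \<noteq> Some d" by (auto simp: remaining_def)
  have a: "\<forall>j l. A j l \<noteq> None \<longleftrightarrow> (j, l) \<in> S"
   and b: "\<forall>j l d. A j l = Some d \<longrightarrow> d \<in> {1..n}"
   and cc: "\<forall>j1 j2 l d. A j1 l = Some d \<longrightarrow> A j2 l = Some d \<longrightarrow> j1 = j2"
    using inv unfolding Inv_def by blast+
  show ?thesis unfolding Inv_def step_eq d_def[symmetric]
  proof (intro conjI allI impI)
    fix j' l show "((if j' = j \<and> l = i then Some d else A j' l) \<noteq> None) = ((j', l) \<in> insert (j, i) S)"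
      using a by auto
  next
    fix j' l d' assume "(if j' = j \<and> l = i then Some d else A j' l) = Some d'"
    thus "d' \<in> {1..n}" using b c1 by (auto split: if_splits)
  next
    fix j1 j2 l d' assume h1: "(if j1 = j \<and> l = i then Some d else A j1 l) = Some d'"
      and h2: "(if j2 = j \<and> l = i then Some d else A j2 l) = Some d'"
    show "j1 = j2"
    proof (cases "j1 = j \<and> l = i")
      case True
      thus ?thesis using h1 h2 c2 by (auto split: if_splits)
    next
      case False
      thus ?thesis using h1 h2 c2 cc by (auto split: if_splits)
    qed
  qed
qed

lemma inv_run:
  assumes P: "is_profile n p P" and O: "is_csam_order n p Ord" and t: "t \<le> length Ord"
  shows "Inv n (st n p P Ord t) (set (take t Ord))"
  using t
proof (induction t)
  case 0 thus ?case by (simp add: Inv_def)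
next
  case (Suc t)
  hence t: "t < length Ord" by simp
  obtain j i where ji: "Ord ! t = (j, i)" by fastforce
  have "Ord ! t \<in> set Ord" by (rule nth_mem[OF t])
  hence mem: "(j, i) \<in> {1..n} \<times> {1..p}" using O ji unfolding is_csam_order_def by simp
  have S: "set (take t Ord) \<subseteq> {1..n} \<times> {1..p}"
    using set_take_subset[of t Ord] O unfolding is_csam_order_def by blast
  have notin: "(j, i) \<notin> set (take t Ord)"
  proof
    assume "(j, i) \<in> set (take t Ord)"
    then obtain k where k: "k < length (take t Ord)" "take t Ord ! k = (j, i)"
      by (auto simp: in_set_conv_nth)
    hence "k < t" "Ord ! k = Ord ! t" using ji by auto
    thus False using O t nth_eq_iff_index_eq[of Ord k t] unfolding is_csam_order_def by simp
  qed
  have "Inv n (csam_step n p P (st n p P Ord t) (j, i)) (insert (j, i) (set (take t Ord)))"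
    using inv_step[OF Suc.IH[OF less_imp_le[OF t]] S _ P _ notin] mem by auto
  thus ?case using t ji by (simp add: take_Suc_conv_app_nth)
qed



lemma card_bundles: "card (bundles n p) = n ^ p"
  unfolding bundles_def by (simp add: card_PiE)

lemma finite_bundles: "finite (bundles n p)"
  unfolding bundles_def by (simp add: finite_PiE)

lemma run_full: "csam_run n p Ord P = st n p P Ord (length Ord)"
  by (simp add: csam_run_def)

lemma alloc_in_bundles:
  assumes P: "is_profile n p P" and O: "is_csam_order n p Ord" and j: "j \<in> {1..n}"
  shows "csam_alloc n p Ord P j \<in> bundles n p"
proof -
  have inv: "Inv n (csam_run n p Ord P) (set Ord)"
    using inv_run[OF P O, of "length Ord"] by (simp add: run_full)
  have "the (csam_run n p Ord P j l) \<in> {1..n}" if l: "l \<in> {1..p}" for l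
  proof -
    have "(j, l) \<in> set Ord" using O j l unfolding is_csam_order_def by simp
    hence "csam_run n p Ord P j l \<noteq> None" using inv unfolding Inv_def by blast
    then obtain d where d: "csam_run n p Ord P j l = Some d" by blast
    hence "d \<in> {1..n}" using inv unfolding Inv_def by blast
    thus ?thesis using d by simp
  qed
  thus ?thesis unfolding bundles_def csam_alloc_def
    by (auto simp: PiE_def extensional_def simp del: atLeastAtMost_iff)
qed

lemma rank_le: "d \<in> set R \<Longrightarrow> Rank R d \<le> length R"
  unfolding Rank_def by (induction R) auto

lemma set_take_nth: "x \<in> set (take t xs) \<longleftrightarrow> (\<exists>k<t. k < length xs \<and> xs ! k = x)"
  by (auto simp: in_set_conv_nth)

definition badat :: "nat \<Rightarrow> (nat \<times> nat) list \<Rightarrow> nat \<Rightarrow> bool" where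
  "badat n Ord t \<longleftrightarrow> (\<exists>a\<in>{1..n}. a \<noteq> fst (Ord ! t) \<and> (a, snd (Ord ! t)) \<notin> set (take t Ord)) \<and>
     (\<forall>u l a. t < u \<longrightarrow> u < length Ord \<longrightarrow> Ord ! u = (fst (Ord ! t), l) \<longrightarrow> a \<in> {1..n} \<longrightarrow>
        a \<noteq> fst (Ord ! t) \<longrightarrow> (a, l) \<in> set (take t Ord))"

definition good :: "nat \<Rightarrow> (nat \<times> nat) list \<Rightarrow> nat \<Rightarrow> bool" where
  "good n Ord j0 \<longleftrightarrow> (\<forall>t<length Ord. fst (Ord ! t) = j0 \<longrightarrow> \<not> badat n Ord t)"

lemma exists_good:
  assumes n: "n \<ge> 1" and O: "is_csam_order n p Ord"
  shows "\<exists>j0\<in>{1..n}. good n Ord j0"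
proof (rule ccontr)
  assume "\<not> ?thesis"
  hence bad: "\<And>j. j \<in> {1..n} \<Longrightarrow> \<exists>t<length Ord. fst (Ord ! t) = j \<and> badat n Ord t"
    unfolding good_def by blast
  have dist: "distinct Ord" and setO: "set Ord = {1..n} \<times> {1..p}"
    using O unfolding is_csam_order_def by auto
  define B where "B = {t. t < length Ord \<and> badat n Ord t}"
  have finB: "finite B" unfolding B_def by simp
  obtain t0 where "t0 < length Ord" "badat n Ord t0" using bad[of 1] n by auto
  hence neB: "B \<noteq> {}" unfolding B_def by blast
  define T where "T = Max B"
  have TB: "T \<in> B" unfolding T_def using finB neB by simp
  have Tmax: "\<And>s. s \<in> B \<Longrightarrow> s \<le> T" unfolding T_def using finB by simp
  obtain j f where jf: "Ord ! T = (j, f)" by fastforce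
  have Tl: "T < length Ord" and bT: "badat n Ord T" using TB unfolding B_def by auto
  have "Ord ! T \<in> set Ord" using Tl by simp
  hence j: "j \<in> {1..n}" and f: "f \<in> {1..p}" using setO jf by auto
  obtain a where a: "a \<in> {1..n}" "a \<noteq> j" "(a, f) \<notin> set (take T Ord)"
    using bT jf unfolding badat_def by auto
  have "(a, f) \<in> set Ord" using a f setO by auto
  then obtain u where u: "u < length Ord" "Ord ! u = (a, f)" by (auto simp: in_set_conv_nth)
  have "\<not> u < T" using a(3) u by (auto simp: set_take_nth)
  moreover have "u \<noteq> T" using u jf a(2) by auto
  ultimately have uT: "T < u" by simp
  obtain s where s: "s < length Ord" "fst (Ord ! s) = a" "badat n Ord s" using bad[OF a(1)] by blast
  have "s \<in> B" using s unfolding B_def by simp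
  hence "s \<le> T" by (rule Tmax)
  moreover have "s \<noteq> T" using s(2) jf a(2) by auto
  ultimately have sT: "s < T" by simp
  have "(j, f) \<in> set (take s Ord)"
    using s(3) sT uT u j a(2) s(2) unfolding badat_def
    by (metis fst_conv less_trans)
  then obtain k where k: "k < s" "k < length Ord" "Ord ! k = (j, f)" by (auto simp: set_take_nth)
  hence "k = T" using dist Tl jf nth_eq_iff_index_eq by metis
  thus False using k sT by simp
qed



lemma hd_filter_min:
  assumes "sorted (map k ys)" "y \<in> set ys" "Q y"
  shows "k (hd (filter Q ys)) \<le> k y"
proof -
  have s: "sorted (map k (filter Q ys))" using assms(1) by (rule sorted_filter)
  have y: "y \<in> set (filter Q ys)" using assms by simp
  then obtain z zs where z: "filter Q ys = z # zs" by (cases "filter Q ys") auto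
  show ?thesis using s y unfolding z by auto
qed

locale cons =
  fixes n p :: nat and Ord :: "(nat \<times> nat) list" and j0 :: nat and L :: "(nat \<Rightarrow> nat) list"
  assumes n: "n \<ge> 1" and O: "is_csam_order n p Ord" and j0: "j0 \<in> {1..n}"
    and g: "good n Ord j0" and L: "distinct L" "set L = bundles n p"
begin

definition ones :: "nat \<Rightarrow> nat" where
  "ones = (\<lambda>i. if i \<in> {1..p} then 1 else undefined)"

definition w :: "nat \<Rightarrow> nat" where
  "w l = length Ord - (THE u. u < length Ord \<and> Ord ! u = (j0, l))"

definition keyJ :: "(nat \<Rightarrow> nat) \<Rightarrow> nat" where
  "keyJ b = (\<Sum>l\<in>{1..p}. if b l \<noteq> 1 then w l else 0)"

definition keyO :: "(nat \<Rightarrow> nat) \<Rightarrow> nat" where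
  "keyO b = card {l\<in>{1..p}. b l = 1}"

definition XS where "XS = filter (\<lambda>b. b \<noteq> ones) (sort_key keyJ L)"
definition RJ where "RJ = XS @ [ones]"
definition RO where "RO = sort_key keyO L"
definition PP where "PP = (\<lambda>j. if j = j0 then RJ else RO)"

lemma dist: "distinct Ord" and setO: "set Ord = {1..n} \<times> {1..p}"
  using O unfolding is_csam_order_def by auto

lemma ones_b: "ones \<in> bundles n p"
  using n unfolding ones_def bundles_def by (auto simp: PiE_def extensional_def)

lemma XS_sorted: "sorted (map keyJ XS)"
  unfolding XS_def by (rule sorted_filter) (rule sorted_sort_key)

lemma set_XS: "set XS = bundles n p - {ones}"
  unfolding XS_def using L by auto

lemma RJ_lin: "is_linear_order n p RJ"
  unfolding is_linear_order_def RJ_def using set_XS ones_b L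
  by (auto simp: XS_def)

lemma RO_lin: "is_linear_order n p RO"
  unfolding is_linear_order_def RO_def using L by (simp add: distinct_sort)

lemma PP_prof: "is_profile n p PP"
  unfolding is_profile_def PP_def using RJ_lin RO_lin by simp

lemma length_RJ: "length RJ = n ^ p"
  using distinct_card[OF conjunct1[OF RJ_lin[unfolded is_linear_order_def]]]
    RJ_lin card_bundles unfolding is_linear_order_def by metis

lemma rank_ones: "Rank RJ ones = n ^ p"
proof -
  have "takeWhile (\<lambda>x. x \<noteq> ones) RJ = XS"
    unfolding RJ_def by (subst takeWhile_append2) (auto simp: XS_def)
  hence "Rank RJ ones = length XS + 1" by (simp add: Rank_def)
  also have "\<dots> = length RJ" by (simp add: RJ_def)
  finally show ?thesis using length_RJ by simp
qed

lemma the_idx: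
  assumes "u < length Ord" "Ord ! u = x"
  shows "(THE u'. u' < length Ord \<and> Ord ! u' = x) = u"
proof (rule the_equality)
  show "u < length Ord \<and> Ord ! u = x" using assms by simp
next
  fix u' assume "u' < length Ord \<and> Ord ! u' = x"
  thus "u' = u" using assms dist nth_eq_iff_index_eq[of Ord u' u] by simp
qed

abbreviation A where "A t \<equiv> st n p PP Ord t"

definition RI where
  "RI t \<longleftrightarrow> (\<forall>l a. (j0, l) \<notin> set (take t Ord) \<longrightarrow> A t a l \<noteq> Some 1) \<and>
     (\<forall>l d. A t j0 l = Some d \<longrightarrow> d = 1)"

lemma basic:
  assumes t: "t < length Ord" and ji: "Ord ! t = (a, i)"
  shows "Inv n (A t) (set (take t Ord))" "set (take t Ord) \<subseteq> {1..n} \<times> {1..p}"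
    "a \<in> {1..n}" "i \<in> {1..p}" "A t a i = None" "(a, i) \<notin> set (take t Ord)"
proof -
  show inv: "Inv n (A t) (set (take t Ord))" using inv_run[OF PP_prof O] t by simp
  show "set (take t Ord) \<subseteq> {1..n} \<times> {1..p}" using set_take_subset[of t Ord] setO by blast
  have "Ord ! t \<in> set Ord" using t by simp
  thus "a \<in> {1..n}" "i \<in> {1..p}" using setO ji by auto
  show ni: "(a, i) \<notin> set (take t Ord)"
  proof
    assume "(a, i) \<in> set (take t Ord)"
    then obtain k where k: "k < t" "k < length Ord" "Ord ! k = (a, i)" by (auto simp: set_take_nth)
    thus False using dist t ji nth_eq_iff_index_eq[of Ord k t] by simp
  qed
  show "A t a i = None" using inv ni unfolding Inv_def by blast
qed

lemma keyO_upd: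
  assumes i: "i \<in> {1..p}" and bi: "b i = 1" and d: "d \<noteq> 1"
  shows "keyO (b(i := d)) < keyO b"
proof -
  have "{l\<in>{1..p}. (b(i := d)) l = 1} = {l\<in>{1..p}. b l = 1} - {i}"
    using d by auto
  moreover have "i \<in> {l\<in>{1..p}. b l = 1}" using bi i by simp
  moreover have "finite {l\<in>{1..p}. b l = 1}" by simp
  ultimately show ?thesis unfolding keyO_def by (metis card_Diff1_less)
qed

lemma other_step:
  assumes t: "t < length Ord" and ji: "Ord ! t = (a, i)" and a: "a \<noteq> j0"
    and ri: "RI t" and nj: "(j0, i) \<notin> set (take t Ord)"
  shows "optimistic_choice n p PP (A t) a i \<noteq> 1"
proof
  note B = basic[OF t ji]
  have dom: "\<And>j'. A t j' i \<noteq> None \<Longrightarrow> j' \<in> {1..n}" using inv_dom[OF B(1) B(2)] by blast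
  have nj0: "A t j0 i = None" using B(1) nj unfolding Inv_def by blast
  obtain d where d: "d \<in> remaining n (A t) i" "d \<noteq> 1"
    using remaining_two[of "A t" i n a j0, OF dom B(3) j0 a B(5) nj0] by blast
  let ?Q = "available_bundle n p (A t) a"
  let ?b = "hd (filter ?Q (PP a))"
  have Qb: "?Q ?b" using top_avail(2)[OF B(1) B(2) B(3) PP_prof] .
  assume "optimistic_choice n p PP (A t) a i = 1"
  hence bi: "?b i = 1" by (simp add: optimistic_choice_def)
  define b' where "b' = ?b(i := d)"
  have bb: "?b \<in> bundles n p" using Qb unfolding available_bundle_def by blast
  have dn: "d \<in> {1..n}" using d unfolding remaining_def by blast
  have b'b: "b' \<in> bundles n p"
    using bb dn B(4) unfolding bundles_def b'_def by (auto simp: PiE_def extensional_def)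
  have Qb': "?Q b'"
    unfolding available_bundle_def
  proof (intro conjI ballI)
    show "b' \<in> bundles n p" by (rule b'b)
    fix l assume l: "l \<in> {1..p}"
    show "case A t a l of None \<Rightarrow> b' l \<in> remaining n (A t) l | Some x \<Rightarrow> b' l = x"
    proof (cases "l = i")
      case True thus ?thesis using B(5) d by (simp add: b'_def)
    next
      case False
      have "case A t a l of None \<Rightarrow> ?b l \<in> remaining n (A t) l | Some x \<Rightarrow> ?b l = x"
        using Qb l unfolding available_bundle_def by blast
      moreover have "b' l = ?b l" using False by (simp add: b'_def)
      ultimately show ?thesis by (cases "A t a l") auto
    qed
  qed
  have "keyO ?b \<le> keyO b'"
  proof -
    have "b' \<in> set (sort_key keyO L)" using L b'b by simp
    from hd_filter_min[of keyO "sort_key keyO L" b' "available_bundle n p (A t) a", OF sorted_sort_key this Qb']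
    moreover have "PP a = sort_key keyO L" using a by (simp add: PP_def RO_def)
    ultimately show ?thesis by (simp only:)
  qed
  moreover have "keyO b' < keyO ?b" unfolding b'_def by (rule keyO_upd[of i ?b d, OF B(4) bi d(2)])
  ultimately show False by simp
qed

lemma keyJ_ge:
  assumes "i \<in> {1..p}" "b i \<noteq> 1"
  shows "w i \<le> keyJ b"
proof -
  have "(if b i \<noteq> 1 then w i else 0) \<le> (\<Sum>l\<in>{1..p}. if b l \<noteq> 1 then w l else 0)"
    by (rule member_le_sum) (use assms in auto)
  thus ?thesis using assms by (simp add: keyJ_def)
qed

lemma keyJ_single:
  assumes l: "l \<in> {1..p}" and d: "d \<noteq> 1"
  shows "keyJ (\<lambda>m. if m \<in> {1..p} then (if m = l then d else 1) else undefined) = w l"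
proof -
  have "keyJ (\<lambda>m. if m \<in> {1..p} then (if m = l then d else 1) else undefined)
      = (\<Sum>m\<in>{1..p}. if m = l then w l else 0)"
    unfolding keyJ_def by (rule sum.cong) (use d in auto)
  also have "\<dots> = w l" using l by simp
  finally show ?thesis .
qed

lemma w_idx: "u < length Ord \<Longrightarrow> Ord ! u = (j0, l) \<Longrightarrow> w l = length Ord - u"
  unfolding w_def using the_idx by simp

lemma j0_step:
  assumes t: "t < length Ord" and ji: "Ord ! t = (j0, i)" and ri: "RI t"
  shows "optimistic_choice n p PP (A t) j0 i = 1"
proof -
  note B = basic[OF t ji]
  have ri1: "\<And>l a. (j0, l) \<notin> set (take t Ord) \<Longrightarrow> A t a l \<noteq> Some 1"
   and ri2: "\<And>l d. A t j0 l = Some d \<Longrightarrow> d = 1" using ri unfolding RI_def by blast+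
  have inv1: "\<And>j l. A t j l \<noteq> None \<longleftrightarrow> (j, l) \<in> set (take t Ord)"
   and inv2: "\<And>j l d. A t j l = Some d \<Longrightarrow> d \<in> {1..n}"
   and inv3: "\<And>j1 j2 l d. A t j1 l = Some d \<Longrightarrow> A t j2 l = Some d \<Longrightarrow> j1 = j2"
    using B(1) unfolding Inv_def by blast+
  have dom: "\<And>j' l. A t j' l \<noteq> None \<Longrightarrow> j' \<in> {1..n}" using inv_dom[OF B(1) B(2)] by blast
  let ?Q = "available_bundle n p (A t) j0"
  let ?c = "optimistic_choice n p PP (A t) j0 i"
  have crem: "?c \<in> remaining n (A t) i"
    by (rule choice_remaining[OF B(1) B(2) j0 PP_prof B(4) B(5)])
  have nb: "\<not> badat n Ord t" using g t ji unfolding good_def by auto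
  show ?thesis
  proof (cases "\<forall>a\<in>{1..n}. a \<noteq> j0 \<longrightarrow> (a, i) \<in> set (take t Ord)")
    case True
    show ?thesis
    proof (rule ccontr)
      assume c1: "?c \<noteq> 1"
      have cn: "?c \<in> {1..n}" and cnt: "\<And>j. A t j i \<noteq> Some ?c"
        using crem unfolding remaining_def by auto
      define X where "X = {1..n} - {j0}"
      define gg where "gg = (\<lambda>a. the (A t a i))"
      have Some: "A t a i = Some (gg a)" if "a \<in> X" for a
        using True that inv1[of a i] unfolding X_def gg_def by auto
      have "inj_on gg X"
        by (rule inj_onI) (metis Some inv3)
      moreover have "gg ` X \<subseteq> {1..n} - {1, ?c}"
      proof
        fix y assume "y \<in> gg ` X"
        then obtain a where a: "a \<in> X" "y = gg a" by blast
        have "y \<in> {1..n}" using inv2 Some[OF a(1)] a(2) by blast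
        moreover have "y \<noteq> 1" using ri1[OF B(6)] Some[OF a(1)] a(2) by metis
        moreover have "y \<noteq> ?c" using cnt Some[OF a(1)] a(2) by metis
        ultimately show "y \<in> {1..n} - {1, ?c}" by blast
      qed
      ultimately have "card X \<le> card ({1..n} - {1, ?c})"
        by (intro card_inj_on_le) auto
      moreover have "card X = n - 1" using j0 unfolding X_def by simp
      moreover have "card ({1..n} - {1, ?c}) = n - 2" using cn c1 by (simp add: card_Diff_subset)
      moreover have "n \<ge> 2" using cn c1 by simp
      ultimately show False by linarith
    qed
  next
    case False
    then obtain a where a: "a \<in> {1..n}" "a \<noteq> j0" "(a, i) \<notin> set (take t Ord)" by blast
    hence "\<not> (\<forall>u l a. t < u \<longrightarrow> u < length Ord \<longrightarrow> Ord ! u = (j0, l) \<longrightarrow> a \<in> {1..n} \<longrightarrow>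
        a \<noteq> j0 \<longrightarrow> (a, l) \<in> set (take t Ord))"
      using nb ji unfolding badat_def by auto
    then obtain u l a' where u: "t < u" "u < length Ord" "Ord ! u = (j0, l)" "a' \<in> {1..n}"
       "a' \<noteq> j0" "(a', l) \<notin> set (take t Ord)" by blast
    have jl: "(j0, l) \<notin> set (take t Ord)"
    proof
      assume "(j0, l) \<in> set (take t Ord)"
      then obtain k where k: "k < t" "k < length Ord" "Ord ! k = (j0, l)" by (auto simp: set_take_nth)
      thus False using dist u nth_eq_iff_index_eq[of Ord k u] by simp
    qed
    have Nj: "A t j0 l = None" and Na: "A t a' l = None" using inv1 jl u(6) by blast+
    have "Ord ! u \<in> set Ord" using u(2) by (rule nth_mem)
    hence l: "l \<in> {1..p}" using setO u(3) by auto
    have li: "l \<noteq> i" using dist t u ji nth_eq_iff_index_eq[of Ord t u] by auto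
    obtain d where d: "d \<in> remaining n (A t) l" "d \<noteq> 1"
    proof -
      have doml: "\<And>j'. A t j' l \<noteq> None \<Longrightarrow> j' \<in> {1..n}" using dom by blast
      show ?thesis using remaining_two[of "A t" l n a' j0, OF doml u(4) j0 u(5) Na Nj] that by blast
    qed
    have dn: "d \<in> {1..n}" using d unfolding remaining_def by blast
    define b' where "b' = (\<lambda>m. if m \<in> {1..p} then (if m = l then d else (1::nat)) else undefined)"
    have b'b: "b' \<in> bundles n p"
      using dn n unfolding bundles_def b'_def by (auto simp: PiE_def extensional_def)
    have Qb': "?Q b'"
      unfolding available_bundle_def
    proof (intro conjI ballI)
      show "b' \<in> bundles n p" by (rule b'b)
      fix m assume m: "m \<in> {1..p}"
      show "case A t j0 m of None \<Rightarrow> b' m \<in> remaining n (A t) m | Some x \<Rightarrow> b' m = x"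
      proof (cases "A t j0 m")
        case (Some x)
        hence "m \<noteq> l" using Nj by auto
        thus ?thesis using Some ri2[OF Some] m by (simp add: b'_def)
      next
        case None
        show ?thesis
        proof (cases "m = l")
          case True thus ?thesis using None d m by (simp add: b'_def)
        next
          case False
          have "(j0, m) \<notin> set (take t Ord)" using None inv1 by blast
          hence "\<And>j. A t j m \<noteq> Some 1" using ri1 by blast
          hence "1 \<in> remaining n (A t) m" using n unfolding remaining_def by auto
          thus ?thesis using None False m by (simp add: b'_def)
        qed
      qed
    qed
    have b'o: "b' \<noteq> ones"
    proof
      assume "b' = ones"
      hence "b' l = ones l" by simp
      thus False using l d(2) by (simp add: b'_def ones_def)
    qed
    have b'X: "b' \<in> set XS" using set_XS b'b b'o by simp
    have neX: "filter ?Q XS \<noteq> []" using b'X Qb' by (metis filter_empty_conv)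
    have hdeq: "hd (filter ?Q (PP j0)) = hd (filter ?Q XS)"
      using neX by (simp add: PP_def RJ_def)
    define bb where "bb = hd (filter ?Q XS)"
    have bbX: "bb \<in> set XS" unfolding bb_def using hd_in_set[OF neX] by simp
    have le: "keyJ bb \<le> keyJ b'" unfolding bb_def
      by (rule hd_filter_min[of keyJ XS b' ?Q, OF XS_sorted b'X Qb'])
    have kb': "keyJ b' = w l" unfolding b'_def by (rule keyJ_single[OF l d(2)])
    have wl: "w l = length Ord - u" by (rule w_idx[OF u(2) u(3)])
    have wi: "w i = length Ord - t" by (rule w_idx[OF t ji])
    have "bb i = 1"
    proof (rule ccontr)
      assume "bb i \<noteq> 1"
      hence "w i \<le> keyJ bb" by (rule keyJ_ge[OF B(4)])
      thus False using le kb' wl wi u(1) u(2) by simp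
    qed
    thus ?thesis using hdeq unfolding bb_def optimistic_choice_def by simp
  qed
qed

lemma RI_all: "t \<le> length Ord \<Longrightarrow> RI t"
proof (induction t)
  case 0 show ?case by (simp add: RI_def)
next
  case (Suc t)
  hence t: "t < length Ord" by simp
  have ri: "RI t" using Suc by simp
  obtain a i where ji: "Ord ! t = (a, i)" by fastforce
  define c where "c = optimistic_choice n p PP (A t) a i"
  have Aeq: "\<And>a' l. A (Suc t) a' l = (if a' = a \<and> l = i then Some c else A t a' l)"
    using st_Suc[OF t] ji by (simp add: step_eq c_def)
  have tk: "set (take (Suc t) Ord) = insert (a, i) (set (take t Ord))"
    using t ji by (simp add: take_Suc_conv_app_nth)
  have ri1: "\<And>l a. (j0, l) \<notin> set (take t Ord) \<Longrightarrow> A t a l \<noteq> Some 1"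
   and ri2: "\<And>l d. A t j0 l = Some d \<Longrightarrow> d = 1" using ri unfolding RI_def by blast+
  show ?case
  proof (cases "a = j0")
    case True
    have c1: "c = 1" unfolding c_def using j0_step[OF t _ ri] ji True by simp
    show ?thesis unfolding RI_def
    proof (intro conjI allI impI)
      fix l a' assume "(j0, l) \<notin> set (take (Suc t) Ord)"
      thus "A (Suc t) a' l \<noteq> Some 1" using ri1 True unfolding Aeq tk by auto
    next
      fix l d assume "A (Suc t) j0 l = Some d"
      thus "d = 1" using ri2 c1 unfolding Aeq by (auto split: if_splits)
    qed
  next
    case False
    show ?thesis unfolding RI_def
    proof (intro conjI allI impI)
      fix l a' assume h: "(j0, l) \<notin> set (take (Suc t) Ord)"
      show "A (Suc t) a' l \<noteq> Some 1"
      proof (cases "a' = a \<and> l = i")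
        case True
        have "(j0, i) \<notin> set (take t Ord)" using h True tk by auto
        hence "c \<noteq> 1" unfolding c_def by (rule other_step[OF t ji False ri])
        thus ?thesis using True Aeq by simp
      next
        case False
        thus ?thesis using ri1 h tk Aeq by auto
      qed
    next
      fix l d assume "A (Suc t) j0 l = Some d"
      thus "d = 1" using ri2 False unfolding Aeq by (auto split: if_splits)
    qed
  qed
qed

lemma final: "Rank (PP j0) (csam_alloc n p Ord PP j0) = n ^ p"
proof -
  have inv: "Inv n (A (length Ord)) (set Ord)" using inv_run[OF PP_prof O, of "length Ord"] by simp
  have ri: "RI (length Ord)" by (rule RI_all) simp
  have "csam_alloc n p Ord PP j0 = ones"
  proof
    fix l
    show "csam_alloc n p Ord PP j0 l = ones l"
    proof (cases "l \<in> {1..p}")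
      case True
      hence "(j0, l) \<in> set Ord" using setO j0 by simp
      hence "A (length Ord) j0 l \<noteq> None" using inv unfolding Inv_def by simp
      then obtain d where d: "A (length Ord) j0 l = Some d" by blast
      hence "d = 1" using ri unfolding RI_def by blast
      thus ?thesis using d True by (simp add: csam_alloc_def ones_def run_full)
    next
      case False thus ?thesis unfolding csam_alloc_def ones_def by presburger
    qed
  qed
  thus ?thesis using rank_ones by (simp add: PP_def)
qed

end


theorem proposition3:
  fixes n p :: nat and Ord :: "(nat \<times> nat) list"
  assumes "n \<ge> 1" and "p \<ge> 1"
    and "is_csam_order n p Ord"
  shows "worst_case_egalitarian_rank n p Ord = n ^ p"
proof -
  note n = assms(1) and O = assms(3)
  obtain j0 where j0: "j0 \<in> {1..n}" and g: "good n Ord j0" using exists_good[OF n O] by blast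
  obtain L where L: "set L = bundles n p" "distinct L"
    using finite_distinct_list[OF finite_bundles] by blast
  interpret c: cons n p Ord j0 L using n O j0 g L by unfold_locales auto
  define S where "S = {Rank (P j) (csam_alloc n p Ord P j) | P j. is_profile n p P \<and> j \<in> {1..n}}"
  have ub: "x \<le> n ^ p" if xS: "x \<in> S" for x
  proof -
    obtain P j where x: "x = Rank (P j) (csam_alloc n p Ord P j)" and P: "is_profile n p P"
      and j: "j \<in> {1..n}" using xS unfolding S_def by blast
    have lin: "is_linear_order n p (P j)" using P j unfolding is_profile_def by blast
    have "csam_alloc n p Ord P j \<in> set (P j)"
      using alloc_in_bundles[OF P O j] lin unfolding is_linear_order_def by simp
    hence "x \<le> length (P j)" unfolding x by (rule rank_le)
    also have "length (P j) = n ^ p"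
      using lin distinct_card[of "P j"] card_bundles unfolding is_linear_order_def by metis
    finally show ?thesis .
  qed
  have mem: "n ^ p \<in> S" unfolding S_def using c.final[symmetric] c.PP_prof j0 by blast
  have fin: "finite S" using ub by (meson finite_atMost finite_subset subsetI atMost_iff)
  have "Max S = n ^ p" by (rule Max_eqI[OF fin ub mem])
  thus ?thesis unfolding worst_case_egalitarian_rank_def S_def .
qed

end
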